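(* For all integers $n\ge1$: (1) $\sum_{k=1}^{n}(F_{k+1}+F_{k-1})F_k^3=F_n^2F_{n+1}^2$; (2) $\sum_{k=1}^{n}(P_{k+1}+P_{k-1})P_k^3=\frac12P_n^2P_{n+1}^2$; (3) $\sum_{k=1}^{n}4^{n-k}(J_{k+1}+2J_{k-1})J_k^3=J_n^2J_{n+1}^2$; (4) $\sum_{k=1}^{n}4^{n-k}(2^k+1)(2^k-1)^3=\frac13(2^n-1)^2(2^{n+1}-1)^2$; (5) for $q\neq1$, $\sum_{k=1}^{n}q^{2(n-k)}\left(\frac{1-q^{2k}}{1-q^2}\right)\left(\frac{1-q^k}{1-q}\right)^2=\left[{n+1\atop 2}\right]_q^2$.
   Context: $F_n$ are the Fibonacci numbers ($F_0=0,F_1=1,F_{n+2}=F_{n+1}+F_n$); $P_n$ the Pell numbers ($P_0=0,P_1=1,P_{n+2}=2P_{n+1}+P_n$); $J_n$ the Jacobsthal numbers ($J_0=0,J_1=1,J_{n+2}=J_{n+1}+2J_n$). $\left[{n+1\atop 2}\right]_q=\frac{(1-q^{n})(1-q^{n+1})}{(1-q)(1-q^2)}$ is the Gaussian binomial coefficient. *)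

theory Defs
  imports Complex_Main "HOL-Number_Theory.Fib"
begin

fun pell :: "nat \<Rightarrow> nat" where
  "pell 0 = 0"
| "pell (Suc 0) = 1"
| "pell (Suc (Suc n)) = 2 * pell (Suc n) + pell n"

fun jacobsthal :: "nat \<Rightarrow> nat" where
  "jacobsthal 0 = 0"
| "jacobsthal (Suc 0) = 1"
| "jacobsthal (Suc (Suc n)) = jacobsthal (Suc n) + 2 * jacobsthal n"

text \<open>Gaussian binomial coefficient [n+1 choose 2]_q, as given in the paper.\<close>
definition gauss_binom2 :: "nat \<Rightarrow> real \<Rightarrow> real" where
  "gauss_binom2 n q = ((1 - q ^ n) * (1 - q ^ (n + 1))) / ((1 - q) * (1 - q ^ 2))"

end

theory Submission
  imports Defs
begin

lemma shift4:
  fixes f :: "nat \<Rightarrow> 'a::comm_semiring_1"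
  shows "(\<Sum>k=1..Suc n. 4 ^ (Suc n - k) * f k) = 4 * (\<Sum>k=1..n. 4 ^ (n - k) * f k) + f (Suc n)"
proof -
  have "(\<Sum>k=1..n. 4 ^ (Suc n - k) * f k) = (\<Sum>k=1..n. 4 * (4 ^ (n - k) * f k))"
    by (rule sum.cong) (auto simp: Suc_diff_le mult.assoc)
  thus ?thesis by (simp add: sum_distrib_left)
qed

lemma p1: "(\<Sum>k=1..n. (fib (k + 1) + fib (k - 1)) * fib k ^ 3) = fib n ^ 2 * fib (n + 1) ^ 2"
proof (induction n)
  case (Suc n)
  have "fib (Suc (Suc n)) = fib (Suc n) + fib n" by simp
  then show ?case using Suc by (simp add: algebra_simps power2_eq_square power3_eq_cube)
qed simp

lemma p2: "(\<Sum>k=1..n. real ((pell (k + 1) + pell (k - 1)) * pell k ^ 3))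
        = (1 / 2) * real (pell n ^ 2 * pell (n + 1) ^ 2)"
proof (induction n)
  case (Suc n)
  have "pell (Suc (Suc n)) = 2 * pell (Suc n) + pell n" by simp
  then show ?case using Suc by (simp add: algebra_simps power2_eq_square power3_eq_cube)
qed simp

lemma p3: "(\<Sum>k=1..n. 4 ^ (n - k) * (jacobsthal (k + 1) + 2 * jacobsthal (k - 1)) * jacobsthal k ^ 3)
        = jacobsthal n ^ 2 * jacobsthal (n + 1) ^ 2"
proof (induction n)
  case (Suc n)
  have e: "jacobsthal (Suc (Suc n)) = jacobsthal (Suc n) + 2 * jacobsthal n" by simp
  have "(\<Sum>k=1..Suc n. 4 ^ (Suc n - k) * (jacobsthal (k + 1) + 2 * jacobsthal (k - 1)) * jacobsthal k ^ 3)
     = (\<Sum>k=1..Suc n. 4 ^ (Suc n - k) * ((jacobsthal (k + 1) + 2 * jacobsthal (k - 1)) * jacobsthal k ^ 3))"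
    by (simp add: mult.assoc)
  also have "\<dots> = 4 * (\<Sum>k=1..n. 4 ^ (n - k) * ((jacobsthal (k + 1) + 2 * jacobsthal (k - 1)) * jacobsthal k ^ 3))
      + (jacobsthal (Suc n + 1) + 2 * jacobsthal (Suc n - 1)) * jacobsthal (Suc n) ^ 3"
    by (rule shift4)
  also have "\<dots> = jacobsthal (Suc n) ^ 2 * jacobsthal (Suc n + 1) ^ 2"
    using Suc e by (simp add: mult.assoc algebra_simps power2_eq_square power3_eq_cube)
  finally show ?case .
qed simp

lemma p4: "(\<Sum>k=1..n. (4::real) ^ (n - k) * (2 ^ k + 1) * (2 ^ k - 1) ^ 3)
        = (1 / 3) * (2 ^ n - 1) ^ 2 * (2 ^ (n + 1) - 1) ^ 2"
proof (induction n)
  case (Suc n)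
  have "(\<Sum>k=1..Suc n. (4::real) ^ (Suc n - k) * (2 ^ k + 1) * (2 ^ k - 1) ^ 3)
     = (\<Sum>k=1..Suc n. (4::real) ^ (Suc n - k) * ((2 ^ k + 1) * (2 ^ k - 1) ^ 3))"
    by (simp add: mult.assoc)
  also have "\<dots> = 4 * (\<Sum>k=1..n. (4::real) ^ (n - k) * ((2 ^ k + 1) * (2 ^ k - 1) ^ 3))
      + ((2 ^ Suc n + 1) * (2 ^ Suc n - 1) ^ 3)"
    by (rule shift4)
  also have "\<dots> = (1 / 3) * (2 ^ Suc n - 1) ^ 2 * (2 ^ (Suc n + 1) - 1) ^ 2"
  proof -
    have IH: "(\<Sum>k=1..n. (4::real) ^ (n - k) * ((2 ^ k + 1) * (2 ^ k - 1) ^ 3)) = (1 / 3) * (2 ^ n - 1) ^ 2 * (2 ^ (n + 1) - 1) ^ 2"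
      using Suc by (simp add: mult.assoc)
    show ?thesis unfolding IH by (simp add: field_simps power2_eq_square power3_eq_cube)
  qed
  finally show ?case .
qed simp

lemma g_step:
  fixes q :: real
  assumes "q \<noteq> 1"
  shows "gauss_binom2 (Suc n) q ^ 2 = q^2 * gauss_binom2 n q ^ 2
     + ((1 - q ^ (2 * Suc n)) / (1 - q ^ 2)) * ((1 - q ^ Suc n) / (1 - q)) ^ 2"
proof (cases "q = -1")
  case True thus ?thesis by (simp add: gauss_binom2_def)
next
  case False
  have d1: "1 - q \<noteq> 0" using assms by simp
  have d2: "1 - q^2 \<noteq> 0" using assms False
    by (metis power2_eq_1_iff right_minus_eq)
  have e1: "q ^ (2 * Suc n) = (q * q^n)^2" "q ^ Suc n = q * q^n" "q ^ (Suc n + 1) = q*q*q^n" "q^(n+1) = q*q^n"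
    by (simp_all add: power_mult power_mult_distrib power2_eq_square)
  have d3: "(1 - q) * (1 - q^2) \<noteq> 0" using d1 d2 by simp
  show ?thesis unfolding gauss_binom2_def e1
    using d1 d2 d3 by (simp add: divide_simps) (simp add: algebra_simps power2_eq_square power3_eq_cube)
qed

lemma p5: "q \<noteq> 1 \<Longrightarrow> (\<Sum>k=1..n. q ^ (2 * (n - k)) * ((1 - q ^ (2 * k)) / (1 - q ^ 2)) * ((1 - q ^ k) / (1 - q)) ^ 2)
        = (gauss_binom2 n (q::real)) ^ 2"
proof (induction n)
  case 0 thus ?case by (simp add: gauss_binom2_def)
next
  case (Suc n)
  have "(\<Sum>k=1..Suc n. q ^ (2 * (Suc n - k)) * ((1 - q ^ (2 * k)) / (1 - q ^ 2)) * ((1 - q ^ k) / (1 - q)) ^ 2)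
    = (\<Sum>k=1..Suc n. (q^2) ^ (Suc n - k) * (((1 - q ^ (2 * k)) / (1 - q ^ 2)) * ((1 - q ^ k) / (1 - q)) ^ 2))"
    by (simp add: power_mult mult.assoc)
  also have "\<dots> = q^2 * (\<Sum>k=1..n. (q^2) ^ (n - k) * (((1 - q ^ (2 * k)) / (1 - q ^ 2)) * ((1 - q ^ k) / (1 - q)) ^ 2))
     + ((1 - q ^ (2 * Suc n)) / (1 - q ^ 2)) * ((1 - q ^ Suc n) / (1 - q)) ^ 2"
  proof -
    have "(\<Sum>k=1..n. (q^2) ^ (Suc n - k) * (((1 - q ^ (2 * k)) / (1 - q ^ 2)) * ((1 - q ^ k) / (1 - q)) ^ 2))
      = (\<Sum>k=1..n. q^2 * ((q^2) ^ (n - k) * (((1 - q ^ (2 * k)) / (1 - q ^ 2)) * ((1 - q ^ k) / (1 - q)) ^ 2)))"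
      by (rule sum.cong) (auto simp: Suc_diff_le)
    thus ?thesis by (simp add: sum_distrib_left)
  qed
  also have "(\<Sum>k=1..n. (q^2) ^ (n - k) * (((1 - q ^ (2 * k)) / (1 - q ^ 2)) * ((1 - q ^ k) / (1 - q)) ^ 2))
     = gauss_binom2 n q ^ 2"
    using Suc by (simp add: power_mult mult.assoc)
  also have "q^2 * gauss_binom2 n q ^ 2
     + ((1 - q ^ (2 * Suc n)) / (1 - q ^ 2)) * ((1 - q ^ Suc n) / (1 - q)) ^ 2 = gauss_binom2 (Suc n) q ^ 2"
    using g_step[OF Suc.prems] by simp
  finally show ?case .
qed

theorem mainTheorem14:
  fixes n :: nat
  assumes "n \<ge> 1"
  shows "(\<Sum>k=1..n. (fib (k + 1) + fib (k - 1)) * fib k ^ 3) = fib n ^ 2 * fib (n + 1) ^ 2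
    \<and> (\<Sum>k=1..n. real ((pell (k + 1) + pell (k - 1)) * pell k ^ 3))
        = (1 / 2) * real (pell n ^ 2 * pell (n + 1) ^ 2)
    \<and> (\<Sum>k=1..n. 4 ^ (n - k) * (jacobsthal (k + 1) + 2 * jacobsthal (k - 1)) * jacobsthal k ^ 3)
        = jacobsthal n ^ 2 * jacobsthal (n + 1) ^ 2
    \<and> (\<Sum>k=1..n. (4::real) ^ (n - k) * (2 ^ k + 1) * (2 ^ k - 1) ^ 3)
        = (1 / 3) * (2 ^ n - 1) ^ 2 * (2 ^ (n + 1) - 1) ^ 2
    \<and> (\<forall>q::real. q \<noteq> 1 \<longrightarrow>
        (\<Sum>k=1..n. q ^ (2 * (n - k)) * ((1 - q ^ (2 * k)) / (1 - q ^ 2)) * ((1 - q ^ k) / (1 - q)) ^ 2)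
        = (gauss_binom2 n q) ^ 2)"
  using p1 p2 p3 p4 p5 by blast

end
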